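(* Let $f(t)$ be a solution of the kinetic Kuramoto model for non-identical oscillators with coupling $K>0$, whose initial datum $f_0$ is absolutely continuous with respect to Lebesgue measure on $\mathcal T\times\mathbb R$ with $\int f_0|\ln f_0|<\infty$. Then $f(t)$ is absolutely continuous for all $t$ and $$\frac{d}{dt}\int_{\mathcal T\times\mathbb R}f(t,\vartheta,\omega)\ln f(t,\vartheta,\omega)\,d\vartheta\,d\omega=K R(t)^2;$$ in particular this quantity is non-decreasing in $t$.
   Context: Kinetic Kuramoto model for non-identical oscillators: $f(t)$ is a probability density on $\mathcal T\times\mathbb R$ ($\mathcal T=\mathbb R/2\pi\mathbb Z$) weakly solving $\partial_t f+\partial_\vartheta(vf)=0$, $v(t,\vartheta,\omega)=\omega-K\int\sin(\vartheta-\vartheta')f(t,\vartheta',\omega')d\vartheta'd\omega'$, i.e. $f(t)$ is the push-forward of $f_0$ along characteristics $\dot\Theta=\omega-KR(t)\sin(\Theta-\varphi(t))$, $\Theta(0,\vartheta,\omega)=\vartheta$, where $R(t)e^{\mathrm{i}\varphi(t)}=\int e^{\mathrm{i}\vartheta}f(t,\vartheta,\omega)d\vartheta d\omega$. *)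

theory Defs
  imports "HOL-Analysis.Analysis"
begin

text \<open>The circle T = R/2piZ is represented by the fundamental domain [0,2pi);
  phase space T x R is represented by the strip below, with Lebesgue measure
  (lborel on real x real restricted to the strip).\<close>

definition Tstrip :: "(real \<times> real) set" where
  "Tstrip = {0..<2*pi} \<times> UNIV"

definition wrap :: "real \<Rightarrow> real" where
  "wrap x = x - 2 * pi * of_int \<lfloor>x / (2 * pi)\<rfloor>"

definition order_param :: "(real \<times> real) measure \<Rightarrow> real" where
  "order_param \<mu> = cmod (\<integral> y. cis (fst y) \<partial>\<mu>)"

definition entropy :: "(real \<times> real \<Rightarrow> real) \<Rightarrow> real" where
  "entropy g = (\<integral> x. g x * ln (g x) \<partial>lborel)"

end

theory Submission
  imports Defs
begin


lemma deriv_bound: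
  fixes f f' :: "real \<Rightarrow> real"
  assumes d: "\<And>z. (f has_real_derivative f' z) (at z)"
    and bd: "\<And>z. min a b \<le> z \<Longrightarrow> z \<le> max a b \<Longrightarrow> \<bar>f' z\<bar> \<le> B"
  shows "\<bar>f b - f a\<bar> \<le> B * \<bar>b - a\<bar>"
proof -
  have main: "\<bar>f y - f x\<bar> \<le> B * \<bar>y - x\<bar>" if "x < y" "\<And>z. x \<le> z \<Longrightarrow> z \<le> y \<Longrightarrow> \<bar>f' z\<bar> \<le> B" for x y
  proof -
    obtain z where z: "x < z" "z < y" "f y - f x = (y - x) * f' z"
      using MVT2[OF \<open>x < y\<close>, of f f'] d by blast
    have "\<bar>f y - f x\<bar> = \<bar>y - x\<bar> * \<bar>f' z\<bar>" using z by (simp add: abs_mult)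
    also have "\<dots> \<le> \<bar>y - x\<bar> * B" using that(2)[of z] z by (intro mult_left_mono) auto
    finally show ?thesis by (simp add: mult.commute)
  qed
  consider "a < b" | "a = b" | "b < a" by linarith
  then show ?thesis
  proof cases
    case 1 then show ?thesis using main[of a b] bd by (auto simp: min_def max_def)
  next
    case 2 then show ?thesis by simp
  next
    case 3 then have "\<bar>f a - f b\<bar> \<le> B * \<bar>a - b\<bar>" using main[of b a] bd by (auto simp: min_def max_def)
    then show ?thesis by (simp add: abs_minus_commute)
  qed
qed

lemma sin_lip: "\<bar>sin (x::real) - sin y\<bar> \<le> \<bar>x - y\<bar>"
  using deriv_bound[of sin cos y x 1] by (auto intro: DERIV_sin abs_cos_le_one)

lemma cos_lip: "\<bar>cos (x::real) - cos y\<bar> \<le> \<bar>x - y\<bar>"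
  using deriv_bound[of cos "\<lambda>z. - sin z" y x 1] by (auto intro: DERIV_cos abs_sin_le_one)

lemma sin_taylor: "\<bar>sin (y::real) - sin x - cos x * (y - x)\<bar> \<le> (y - x)^2"
proof -
  have "\<bar>(sin y - cos x * y) - (sin x - cos x * x)\<bar> \<le> \<bar>y - x\<bar> * \<bar>y - x\<bar>"
  proof (rule deriv_bound[where f' = "\<lambda>z. cos z - cos x"])
    show "((\<lambda>z. sin z - cos x * z) has_real_derivative cos z - cos x) (at z)" for z
      by (auto intro!: derivative_eq_intros)
    show "\<bar>cos z - cos x\<bar> \<le> \<bar>y - x\<bar>" if "min x y \<le> z" "z \<le> max x y" for z
      using cos_lip[of z x] that by (auto simp: min_def max_def split: if_splits)
  qed
  then show ?thesis by (simp add: power2_eq_square algebra_simps abs_mult)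
qed

lemma cos_taylor: "\<bar>cos (y::real) - cos x + sin x * (y - x)\<bar> \<le> (y - x)^2"
proof -
  have "\<bar>(cos y + sin x * y) - (cos x + sin x * x)\<bar> \<le> \<bar>y - x\<bar> * \<bar>y - x\<bar>"
  proof (rule deriv_bound[where f' = "\<lambda>z. - sin z + sin x"])
    show "((\<lambda>z. cos z + sin x * z) has_real_derivative - sin z + sin x) (at z)" for z
      by (auto intro!: derivative_eq_intros)
    show "\<bar>- sin z + sin x\<bar> \<le> \<bar>y - x\<bar>" if "min x y \<le> z" "z \<le> max x y" for z
      using sin_lip[of x z] that by (auto simp: min_def max_def split: if_splits)
  qed
  then show ?thesis by (simp add: power2_eq_square algebra_simps abs_mult)
qed

lemma ode_unique:
  fixes u v :: "real \<Rightarrow> real" and G :: "real \<Rightarrow> real \<Rightarrow> real"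
  assumes du: "\<And>s. (u has_real_derivative G s (u s)) (at s)"
    and dv: "\<And>s. (v has_real_derivative G s (v s)) (at s)"
    and lip: "\<And>s x y. \<bar>G s x - G s y\<bar> \<le> L * \<bar>x - y\<bar>"
    and eq: "u t0 = v t0"
  shows "u t = v t"
proof -
  define w where "w s = (u s - v s)^2" for s
  have dw: "(w has_real_derivative 2 * (u s - v s) * (G s (u s) - G s (v s))) (at s)" for s
    unfolding w_def by (auto intro!: derivative_eq_intros du dv)
  have bw: "\<bar>2 * (u s - v s) * (G s (u s) - G s (v s))\<bar> \<le> 2 * L * w s" for s
  proof -
    have "\<bar>2 * (u s - v s) * (G s (u s) - G s (v s))\<bar> = 2 * \<bar>u s - v s\<bar> * \<bar>G s (u s) - G s (v s)\<bar>"
      by (simp only: abs_mult abs_numeral)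
    also have "\<dots> \<le> 2 * \<bar>u s - v s\<bar> * (L * \<bar>u s - v s\<bar>)"
      by (intro mult_left_mono lip) auto
    also have "\<dots> = 2 * L * w s" by (simp add: w_def power2_eq_square abs_mult_self_eq algebra_simps)
    finally show ?thesis .
  qed
  have w0: "w t0 = 0" using eq by (simp add: w_def)
  have wnn: "w s \<ge> 0" for s by (simp add: w_def)
  show ?thesis
  proof (cases "t0 \<le> t")
    case True
    define p where "p s = exp (- (2 * L) * s) * w s" for s
    have "p t \<le> p t0"
    proof (rule DERIV_nonpos_imp_nonincreasing[OF True])
      fix x
      have "(p has_real_derivative exp (- (2 * L) * x) * (- (2 * L)) * w x + exp (- (2 * L) * x) * (2 * (u x - v x) * (G x (u x) - G x (v x)))) (at x)"
        unfolding p_def by (auto intro!: derivative_eq_intros dw)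
      moreover have "exp (- (2 * L) * x) * (- (2 * L)) * w x + exp (- (2 * L) * x) * (2 * (u x - v x) * (G x (u x) - G x (v x))) \<le> 0"
      proof -
        have "2 * (u x - v x) * (G x (u x) - G x (v x)) \<le> 2 * L * w x" using bw[of x] by linarith
        then have "exp (- (2 * L) * x) * (2 * (u x - v x) * (G x (u x) - G x (v x))) \<le> exp (- (2 * L) * x) * (2 * L * w x)"
          by (intro mult_left_mono) auto
        then show ?thesis by (simp add: algebra_simps)
      qed
      ultimately show "\<exists>y. (p has_real_derivative y) (at x) \<and> y \<le> 0" by blast
    qed
    then have "w t \<le> 0" using w0 by (simp add: p_def mult_le_0_iff)
    then have "w t = 0" using wnn[of t] by linarith
    then show ?thesis by (simp add: w_def)
  next
    case False
    then have le: "t \<le> t0" by simp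
    define p where "p s = exp ((2 * L) * s) * w s" for s
    have "p t \<le> p t0"
    proof (rule DERIV_nonneg_imp_nondecreasing[OF le])
      fix x
      have "(p has_real_derivative exp ((2 * L) * x) * (2 * L) * w x + exp ((2 * L) * x) * (2 * (u x - v x) * (G x (u x) - G x (v x)))) (at x)"
        unfolding p_def by (auto intro!: derivative_eq_intros dw)
      moreover have "exp ((2 * L) * x) * (2 * L) * w x + exp ((2 * L) * x) * (2 * (u x - v x) * (G x (u x) - G x (v x))) \<ge> 0"
      proof -
        have "- (2 * L * w x) \<le> 2 * (u x - v x) * (G x (u x) - G x (v x))" using bw[of x] by linarith
        then have "exp ((2 * L) * x) * (- (2 * L * w x)) \<le> exp ((2 * L) * x) * (2 * (u x - v x) * (G x (u x) - G x (v x)))"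
          by (intro mult_left_mono) auto
        then show ?thesis by (simp add: algebra_simps)
      qed
      ultimately show "\<exists>y. (p has_real_derivative y) (at x) \<and> y \<ge> 0" by blast
    qed
    then have "w t \<le> 0" using w0 by (simp add: p_def mult_le_0_iff)
    then have "w t = 0" using wnn[of t] by linarith
    then show ?thesis by (simp add: w_def)
  qed
qed




lemma lborel_shift: "(F::real \<Rightarrow> ennreal) \<in> borel_measurable borel \<Longrightarrow> (\<integral>\<^sup>+x. F x \<partial>lborel) = (\<integral>\<^sup>+x. F (t + x) \<partial>lborel)"
  using nn_integral_real_affine[of F 1 t] by simp

lemma periodic_int:
  fixes G :: "real \<Rightarrow> 'b"
  assumes per: "\<And>x. G (x + c) = G x"
  shows "G (x + of_int k * c) = G x"
proof -
  have n: "G (y + real n * c) = G y" for y n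
  proof (induction n)
    case (Suc n)
    have "G (y + real (Suc n) * c) = G ((y + real n * c) + c)" by (simp add: algebra_simps)
    then show ?case using Suc per by simp
  qed simp
  show ?thesis
  proof (cases "k \<ge> 0")
    case True then show ?thesis using n[of x "nat k"] by simp
  next
    case False
    have "G (x + of_int k * c) = G ((x + of_int k * c) + real (nat (-k)) * c)" using n by metis
    also have "(x + of_int k * c) + real (nat (-k)) * c = x" using False by (simp add: algebra_simps)
    finally show ?thesis .
  qed
qed

lemma window:
  fixes G :: "real \<Rightarrow> ennreal" and c :: real
  assumes c: "c > 0" and [measurable]: "G \<in> borel_measurable borel"
    and per: "\<And>x. G (x + c) = G x"
  shows "(\<integral>\<^sup>+x. G x * indicator {a..<a+c} x \<partial>lborel) = (\<integral>\<^sup>+x. G x * indicator {0..<c} x \<partial>lborel)"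
proof -
  define k where "k = \<lfloor>a / c\<rfloor>"
  define r where "r = a - of_int k * c"
  have r: "0 \<le> r" "r < c"
  proof -
    have "of_int k \<le> a / c" "a / c < of_int k + 1" unfolding k_def by linarith+
    then have "of_int k * c \<le> a" "a < (of_int k + 1) * c" using c by (auto simp: field_simps)
    then show "0 \<le> r" "r < c" unfolding r_def by (auto simp: algebra_simps)
  qed
  have "(\<integral>\<^sup>+x. G x * indicator {a..<a+c} x \<partial>lborel)
      = (\<integral>\<^sup>+x. G (of_int k * c + x) * indicator {a..<a+c} (of_int k * c + x) \<partial>lborel)"
    by (rule lborel_shift) measurable
  also have "\<dots> = (\<integral>\<^sup>+x. G x * indicator {r..<r+c} x \<partial>lborel)"
    by (intro nn_integral_cong) (auto simp: periodic_int[where G=G, OF per] add.commute r_def indicator_def)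
  also have "\<dots> = (\<integral>\<^sup>+x. G x * indicator {r..<c} x + G x * indicator {c..<r+c} x \<partial>lborel)"
    by (intro nn_integral_cong) (use r in \<open>auto simp: indicator_def\<close>)
  also have "\<dots> = (\<integral>\<^sup>+x. G x * indicator {r..<c} x \<partial>lborel) + (\<integral>\<^sup>+x. G x * indicator {c..<r+c} x \<partial>lborel)"
    by (rule nn_integral_add) measurable
  also have "(\<integral>\<^sup>+x. G x * indicator {c..<r+c} x \<partial>lborel) = (\<integral>\<^sup>+x. G (c + x) * indicator {c..<r+c} (c + x) \<partial>lborel)"
    by (rule lborel_shift) measurable
  also have "\<dots> = (\<integral>\<^sup>+x. G x * indicator {0..<r} x \<partial>lborel)"
    by (intro nn_integral_cong) (auto simp: per add.commute indicator_def)
  also have "(\<integral>\<^sup>+x. G x * indicator {r..<c} x \<partial>lborel) + (\<integral>\<^sup>+x. G x * indicator {0..<r} x \<partial>lborel)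
      = (\<integral>\<^sup>+x. G x * indicator {r..<c} x + G x * indicator {0..<r} x \<partial>lborel)"
    by (rule nn_integral_add[symmetric]) measurable
  also have "\<dots> = (\<integral>\<^sup>+x. G x * indicator {0..<c} x \<partial>lborel)"
    by (intro nn_integral_cong) (use r in \<open>auto simp: indicator_def\<close>)
  finally show ?thesis .
qed




lemma subst_enn:
  fixes u u' :: "real \<Rightarrow> real" and G :: "real \<Rightarrow> ennreal"
  assumes du: "\<And>x. (u has_real_derivative u' x) (at x)"
    and cu': "continuous_on UNIV u'"
    and nn: "\<And>x. u' x \<ge> 0"
    and ab: "a \<le> b"
    and [measurable]: "G \<in> borel_measurable borel"
  shows "(\<integral>\<^sup>+y. G y * indicator {u a..u b} y \<partial>lborel) = (\<integral>\<^sup>+x. G (u x) * ennreal (u' x) * indicator {a..b} x \<partial>lborel)"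
proof -
  have cu: "continuous_on UNIV u"
    using du by (intro continuous_at_imp_continuous_on) (auto intro: DERIV_isCont)
  have [measurable]: "u \<in> borel_measurable borel" "u' \<in> borel_measurable borel"
    using cu cu' by (auto intro: borel_measurable_continuous_onI)
  have eqm: "density lborel (indicator {u a..u b}) = distr (density lborel (\<lambda>x. ennreal (u' x) * indicator {a..b} x)) lborel u"
  proof (rule measure_eqI)
    fix A assume A: "A \<in> sets (density lborel (indicator {u a..u b}))"
    then have [measurable]: "A \<in> sets borel" by simp
    have "emeasure (density lborel (indicator {u a..u b})) A = (\<integral>\<^sup>+y. indicator {u a..u b} y * indicator A y \<partial>lborel)"
      by (rule emeasure_density) auto
    also have "\<dots> = (\<integral>\<^sup>+y. ennreal (indicator A y * indicator {u a..u b} y) \<partial>lborel)"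
      by (intro nn_integral_cong) (auto simp: indicator_def)
    also have "\<dots> = (\<integral>\<^sup>+x. ennreal (indicator A (u x) * u' x * indicator {a..b} x) \<partial>lborel)"
      by (rule nn_integral_substitution[where f="indicator A"]) (use du cu' nn ab in \<open>auto intro: continuous_on_subset simp: set_borel_measurable_def\<close>)
    also have "\<dots> = (\<integral>\<^sup>+x. (ennreal (u' x) * indicator {a..b} x) * indicator (u -` A \<inter> space lborel) x \<partial>lborel)"
      by (intro nn_integral_cong) (auto simp: indicator_def)
    also have "\<dots> = emeasure (density lborel (\<lambda>x. ennreal (u' x) * indicator {a..b} x)) (u -` A \<inter> space lborel)"
      by (rule emeasure_density[symmetric]) (use measurable_sets[of u borel borel A] in auto)
    also have "\<dots> = emeasure (distr (density lborel (\<lambda>x. ennreal (u' x) * indicator {a..b} x)) lborel u) A"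
      by (subst emeasure_distr) auto
    finally show "emeasure (density lborel (indicator {u a..u b})) A = emeasure (distr (density lborel (\<lambda>x. ennreal (u' x) * indicator {a..b} x)) lborel u) A" .
  qed simp
  have "(\<integral>\<^sup>+y. G y * indicator {u a..u b} y \<partial>lborel) = (\<integral>\<^sup>+y. indicator {u a..u b} y * G y \<partial>lborel)"
    by (simp add: mult.commute)
  also have "\<dots> = (\<integral>\<^sup>+y. G y \<partial>density lborel (indicator {u a..u b}))"
    by (rule nn_integral_density[symmetric]) auto
  also have "\<dots> = (\<integral>\<^sup>+y. G y \<partial>distr (density lborel (\<lambda>x. ennreal (u' x) * indicator {a..b} x)) lborel u)"
    by (simp add: eqm)
  also have "\<dots> = (\<integral>\<^sup>+x. G (u x) \<partial>density lborel (\<lambda>x. ennreal (u' x) * indicator {a..b} x))"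
    by (rule nn_integral_distr) auto
  also have "\<dots> = (\<integral>\<^sup>+x. (ennreal (u' x) * indicator {a..b} x) * G (u x) \<partial>lborel)"
    by (rule nn_integral_density) auto
  also have "\<dots> = (\<integral>\<^sup>+x. G (u x) * ennreal (u' x) * indicator {a..b} x \<partial>lborel)"
    by (simp add: ac_simps)
  finally show ?thesis .
qed




lemma lbp1: "measurable (borel::(real\<times>real) measure) N = measurable (borel \<Otimes>\<^sub>M borel) N"
  by (rule measurable_cong_sets) (simp_all add: borel_prod[symmetric])
lemma lbp2: "measurable M (borel::(real\<times>real) measure) = measurable M (borel \<Otimes>\<^sub>M borel)"
  by (rule measurable_cong_sets) (simp_all add: borel_prod[symmetric])

lemma wrap_meas[measurable]: "wrap \<in> borel_measurable borel"
  unfolding wrap_def by measurable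

lemma wrap_eq: "\<exists>k::int. wrap x = x + 2 * pi * of_int k"
  unfolding wrap_def by (rule exI[of _ "- \<lfloor>x / (2 * pi)\<rfloor>"]) simp

lemma wrap_range: "0 \<le> wrap x" "wrap x < 2 * pi"
proof -
  have "of_int \<lfloor>x / (2 * pi)\<rfloor> \<le> x / (2 * pi)" "x / (2 * pi) < of_int \<lfloor>x / (2 * pi)\<rfloor> + 1" by linarith+
  then have "of_int \<lfloor>x / (2 * pi)\<rfloor> * (2 * pi) \<le> x" "x < (of_int \<lfloor>x / (2 * pi)\<rfloor> + 1) * (2 * pi)"
  proof -
    have p: "0 < 2 * pi" using pi_gt_zero by simp
    assume a: "of_int \<lfloor>x / (2 * pi)\<rfloor> \<le> x / (2 * pi)" "x / (2 * pi) < of_int \<lfloor>x / (2 * pi)\<rfloor> + 1"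
    show "of_int \<lfloor>x / (2 * pi)\<rfloor> * (2 * pi) \<le> x" using a(1) pos_le_divide_eq[OF p] by blast
    show "x < (of_int \<lfloor>x / (2 * pi)\<rfloor> + 1) * (2 * pi)" using a(2) pos_divide_less_eq[OF p] by blast
  qed
  then show "0 \<le> wrap x" "wrap x < 2 * pi" unfolding wrap_def by (auto simp: algebra_simps)
qed

lemma wrap_id: "0 \<le> x \<Longrightarrow> x < 2 * pi \<Longrightarrow> wrap x = x"
proof -
  assume "0 \<le> x" "x < 2 * pi"
  then have "0 \<le> x / (2 * pi)" "x / (2 * pi) < 1" using pi_gt_zero by (auto simp: field_simps)
  then have "\<lfloor>x / (2 * pi)\<rfloor> = 0" by linarith
  then show ?thesis by (simp add: wrap_def)
qed

lemma wrap_shift: "wrap (x + 2 * pi * of_int k) = wrap x"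
proof -
  have "(x + 2 * pi * of_int k) / (2 * pi) = x / (2 * pi) + of_int k" using pi_gt_zero by (simp add: field_simps)
  then have "\<lfloor>(x + 2 * pi * of_int k) / (2 * pi)\<rfloor> = \<lfloor>x / (2 * pi)\<rfloor> + k" by simp
  then show ?thesis unfolding wrap_def by (simp add: algebra_simps)
qed

lemma sin_2pik: "sin (x + 2 * pi * of_int k) = sin x"
  by (metis sin_add cos_int_2pin sin_int_2pin mult_1_right add_0_right mult_zero_right)
lemma cos_2pik: "cos (x + 2 * pi * of_int k) = cos x"
  by (metis cos_add cos_int_2pin sin_int_2pin mult_1_right diff_0_right mult_zero_right)
lemma sin_wrap[simp]: "sin (wrap x) = sin x" using wrap_eq[of x] sin_2pik by metis
lemma cos_wrap[simp]: "cos (wrap x) = cos x" using wrap_eq[of x] cos_2pik by metis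

locale kur =
  fixes K :: real
    and f0 :: "real \<times> real \<Rightarrow> real"
    and \<Theta> :: "real \<Rightarrow> real \<Rightarrow> real \<Rightarrow> real"
    and \<mu> :: "real \<Rightarrow> (real \<times> real) measure"
  assumes K_pos: "K > 0"
    and f0_meas: "f0 \<in> borel_measurable lborel"
    and f0_nonneg: "\<And>x. f0 x \<ge> 0"
    and f0_supp: "\<And>x. x \<notin> Tstrip \<Longrightarrow> f0 x = 0"
    and f0_int: "integrable lborel f0"
    and f0_prob: "(\<integral> x. f0 x \<partial>lborel) = 1"
    and f0_entropy: "integrable lborel (\<lambda>x. f0 x * \<bar>ln (f0 x)\<bar>)"
    and \<Theta>_meas: "\<And>t. (\<lambda>x. \<Theta> t (fst x) (snd x)) \<in> borel_measurable lborel"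
    and \<mu>_def: "\<And>t. \<mu> t = distr (density lborel (\<lambda>x. ennreal (f0 x))) lborel
                         (\<lambda>x. (wrap (\<Theta> t (fst x) (snd x)), snd x))"
    and \<Theta>_init: "\<And>\<theta> \<omega>. \<Theta> 0 \<theta> \<omega> = \<theta>"
    and \<Theta>_ode: "\<And>t \<theta> \<omega>. ((\<lambda>s. \<Theta> s \<theta> \<omega>) has_real_derivative
                   (\<omega> - K * (\<integral> y. sin (\<Theta> t \<theta> \<omega> - fst y) \<partial>\<mu> t))) (at t)"
begin

lemma f0_meas2[measurable]: "f0 \<in> borel_measurable (borel \<Otimes>\<^sub>M borel)"
  using f0_meas by (simp add: lbp1[symmetric])
lemma \<Theta>_meas2[measurable]: "(\<lambda>x. \<Theta> t (fst x) (snd x)) \<in> borel_measurable (borel \<Otimes>\<^sub>M borel)"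
  using \<Theta>_meas[of t] by (simp add: lbp1[symmetric])

definition Phi :: "real \<Rightarrow> real \<times> real \<Rightarrow> real \<times> real" where
  "Phi t x = (wrap (\<Theta> t (fst x) (snd x)), snd x)"
definition Cc :: "real \<Rightarrow> real" where
  "Cc t = (\<integral>x. f0 x * cos (\<Theta> t (fst x) (snd x)) \<partial>lborel)"
definition Ss :: "real \<Rightarrow> real" where
  "Ss t = (\<integral>x. f0 x * sin (\<Theta> t (fst x) (snd x)) \<partial>lborel)"
definition V :: "real \<Rightarrow> real \<Rightarrow> real \<Rightarrow> real" where
  "V t z \<omega> = \<omega> - K * (sin z * Cc t - cos z * Ss t)"

lemma Phi_meas: "Phi t \<in> measurable lborel lborel"
  unfolding measurable_lborel1 measurable_lborel2 lbp1 lbp2 Phi_def by measurable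

lemma \<mu>_Phi: "\<mu> t = distr (density lborel (\<lambda>x. ennreal (f0 x))) lborel (Phi t)"
  unfolding \<mu>_def Phi_def[abs_def] ..

lemma int_mu:
  assumes "g \<in> borel_measurable lborel"
  shows "integral\<^sup>L (\<mu> t) g = (\<integral>x. f0 x * g (Phi t x) \<partial>lborel)"
proof -
  have "integral\<^sup>L (\<mu> t) g = integral\<^sup>L (density lborel (\<lambda>x. ennreal (f0 x))) (\<lambda>x. g (Phi t x))"
    unfolding \<mu>_Phi using Phi_meas[of t] assms by (subst integral_distr) auto
  also have "\<dots> = (\<integral>x. f0 x * g (Phi t x) \<partial>lborel)"
    using Phi_meas[of t] assms f0_meas f0_nonneg by (subst integral_density) auto
  finally show ?thesis .
qed

lemma int_bounded:
  assumes [measurable]: "h \<in> borel_measurable borel" and b: "\<And>z. \<bar>h z\<bar> \<le> 1"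
  shows "integrable lborel (\<lambda>x. f0 x * h (\<Theta> t (fst x) (snd x)))"
proof (rule Bochner_Integration.integrable_bound[OF f0_int])
  show "(\<lambda>x. f0 x * h (\<Theta> t (fst x) (snd x))) \<in> borel_measurable lborel" unfolding measurable_lborel2 lbp1 by measurable
  show "AE x in lborel. norm (f0 x * h (\<Theta> t (fst x) (snd x))) \<le> norm (f0 x)"
    using b f0_nonneg by (auto simp: abs_mult intro!: mult_left_le)
qed

lemma int_cos: "integrable lborel (\<lambda>x. f0 x * cos (\<Theta> t (fst x) (snd x)))"
  by (rule int_bounded) auto
lemma int_sin: "integrable lborel (\<lambda>x. f0 x * sin (\<Theta> t (fst x) (snd x)))"
  by (rule int_bounded) auto

lemma int_bound1:
  assumes "h \<in> borel_measurable borel" and b: "\<And>z. \<bar>h z\<bar> \<le> 1"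
  shows "\<bar>\<integral>x. f0 x * h (\<Theta> t (fst x) (snd x)) \<partial>lborel\<bar> \<le> 1"
proof -
  have "\<bar>\<integral>x. f0 x * h (\<Theta> t (fst x) (snd x)) \<partial>lborel\<bar> \<le> (\<integral>x. f0 x \<partial>lborel)"
    using int_bounded[OF assms] f0_int b f0_nonneg
    by (intro integral_abs_bound_integral) (auto simp: abs_mult intro!: mult_left_le)
  then show ?thesis using f0_prob by simp
qed

lemma Cc_bound: "\<bar>Cc t\<bar> \<le> 1" unfolding Cc_def by (rule int_bound1) auto
lemma Ss_bound: "\<bar>Ss t\<bar> \<le> 1" unfolding Ss_def by (rule int_bound1) auto

lemma ode_rhs: "(\<integral> y. sin (z - fst y) \<partial>\<mu> t) = sin z * Cc t - cos z * Ss t"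
proof -
  have "(\<integral> y. sin (z - fst y) \<partial>\<mu> t) = (\<integral>x. f0 x * sin (z - fst (Phi t x)) \<partial>lborel)"
    by (rule int_mu) (simp add: lbp1)
  also have "\<dots> = (\<integral>x. sin z * (f0 x * cos (\<Theta> t (fst x) (snd x))) - cos z * (f0 x * sin (\<Theta> t (fst x) (snd x))) \<partial>lborel)"
  proof (intro Bochner_Integration.integral_cong refl)
    fix x
    show "f0 x * sin (z - fst (Phi t x)) = sin z * (f0 x * cos (\<Theta> t (fst x) (snd x))) - cos z * (f0 x * sin (\<Theta> t (fst x) (snd x)))"
      by (simp add: Phi_def sin_diff algebra_simps)
  qed
  also have "\<dots> = sin z * Cc t - cos z * Ss t"
    using int_cos int_sin by (simp add: Cc_def Ss_def)
  finally show ?thesis .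
qed

lemma \<Theta>_deriv: "((\<lambda>s. \<Theta> s \<theta> \<omega>) has_real_derivative V t (\<Theta> t \<theta> \<omega>) \<omega>) (at t)"
  using \<Theta>_ode[of \<theta> \<omega> t] by (simp add: ode_rhs V_def)

lemma \<Theta>_cont: "isCont (\<lambda>s. \<Theta> s \<theta> \<omega>) t"
  using \<Theta>_deriv by (rule DERIV_isCont)

lemma V_lip: "\<bar>V t x \<omega> - V t y \<omega>\<bar> \<le> 2 * K * \<bar>x - y\<bar>"
proof -
  have "V t x \<omega> - V t y \<omega> = - K * ((sin x - sin y) * Cc t - (cos x - cos y) * Ss t)"
    by (simp add: V_def algebra_simps)
  then have "\<bar>V t x \<omega> - V t y \<omega>\<bar> = K * \<bar>(sin x - sin y) * Cc t - (cos x - cos y) * Ss t\<bar>"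
    using K_pos by (simp add: abs_mult)
  also have "\<dots> \<le> K * (\<bar>sin x - sin y\<bar> * \<bar>Cc t\<bar> + \<bar>cos x - cos y\<bar> * \<bar>Ss t\<bar>)"
    using K_pos by (intro mult_left_mono) (auto simp: abs_mult[symmetric] intro: abs_triangle_ineq4)
  also have "\<dots> \<le> K * (\<bar>x - y\<bar> * 1 + \<bar>x - y\<bar> * 1)"
    using K_pos sin_lip[of x y] cos_lip[of x y] Cc_bound[of t] Ss_bound[of t]
    by (intro mult_left_mono add_mono mult_mono) auto
  finally show ?thesis by simp
qed

lemma cont_int:
  assumes hc: "continuous_on UNIV h" and b: "\<And>z. \<bar>h z\<bar> \<le> 1"
  shows "isCont (\<lambda>t. \<integral>x. f0 x * h (\<Theta> t (fst x) (snd x)) \<partial>lborel) t"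
proof -
  have [measurable]: "h \<in> borel_measurable borel" using hc by (rule borel_measurable_continuous_onI)
  show ?thesis unfolding continuous_at_sequentially comp_def
  proof (intro allI impI)
    fix X assume X: "X \<longlonglongrightarrow> t"
    show "(\<lambda>n. \<integral>x. f0 x * h (\<Theta> (X n) (fst x) (snd x)) \<partial>lborel) \<longlonglongrightarrow> (\<integral>x. f0 x * h (\<Theta> t (fst x) (snd x)) \<partial>lborel)"
    proof (rule integral_dominated_convergence[where w=f0])
      show "(\<lambda>x. f0 x * h (\<Theta> t (fst x) (snd x))) \<in> borel_measurable lborel" unfolding measurable_lborel2 lbp1 by measurable
      show "(\<lambda>x. f0 x * h (\<Theta> (X n) (fst x) (snd x))) \<in> borel_measurable lborel" for n unfolding measurable_lborel2 lbp1 by measurable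
      show "integrable lborel f0" by (rule f0_int)
      show "AE x in lborel. (\<lambda>n. f0 x * h (\<Theta> (X n) (fst x) (snd x))) \<longlonglongrightarrow> f0 x * h (\<Theta> t (fst x) (snd x))"
      proof (intro AE_I2 tendsto_mult tendsto_const)
        fix x :: "real \<times> real"
        have "(\<lambda>n. \<Theta> (X n) (fst x) (snd x)) \<longlonglongrightarrow> \<Theta> t (fst x) (snd x)"
          using isCont_tendsto_compose[OF \<Theta>_cont X] .
        then show "(\<lambda>n. h (\<Theta> (X n) (fst x) (snd x))) \<longlonglongrightarrow> h (\<Theta> t (fst x) (snd x))"
          using hc by (intro isCont_tendsto_compose[where g=h]) (auto simp: continuous_on_eq_continuous_at)
      qed
      show "AE x in lborel. norm (f0 x * h (\<Theta> (X n) (fst x) (snd x))) \<le> f0 x" for n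
        using b f0_nonneg by (auto simp: abs_mult intro!: mult_left_le)
    qed
  qed
qed

lemma Cc_cont: "isCont Cc t"
  unfolding Cc_def[abs_def] by (rule cont_int) (auto intro: continuous_intros)
lemma Ss_cont: "isCont Ss t"
  unfolding Ss_def[abs_def] by (rule cont_int) (auto intro: continuous_intros)

end



context kur begin

lemma \<Theta>_inj: "\<Theta> t \<theta>1 \<omega> = \<Theta> t \<theta>2 \<omega> \<Longrightarrow> \<theta>1 = \<theta>2"
  using ode_unique[of "\<lambda>s. \<Theta> s \<theta>1 \<omega>" "\<lambda>s z. V s z \<omega>" "\<lambda>s. \<Theta> s \<theta>2 \<omega>" "2 * K" t 0]
    \<Theta>_deriv V_lip by (simp add: \<Theta>_init)

lemma V_shift: "V s (z + 2 * pi * of_int k) \<omega> = V s z \<omega>"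
  by (simp add: V_def sin_2pik cos_2pik)

lemma \<Theta>_period: "\<Theta> t (\<theta> + 2 * pi * of_int k) \<omega> = \<Theta> t \<theta> \<omega> + 2 * pi * of_int k"
proof (rule ode_unique[of "\<lambda>s. \<Theta> s (\<theta> + 2 * pi * of_int k) \<omega>" "\<lambda>s z. V s z \<omega>" "\<lambda>s. \<Theta> s \<theta> \<omega> + 2 * pi * of_int k" "2 * K" 0])
  show "((\<lambda>s. \<Theta> s \<theta> \<omega> + 2 * pi * of_int k) has_real_derivative V s (\<Theta> s \<theta> \<omega> + 2 * pi * of_int k) \<omega>) (at s)" for s
    unfolding V_shift by (auto intro!: derivative_eq_intros \<Theta>_deriv)
qed (auto intro: \<Theta>_deriv V_lip simp: \<Theta>_init)

lemma \<Theta>_period1: "\<Theta> t (\<theta> + 2 * pi) \<omega> = \<Theta> t \<theta> \<omega> + 2 * pi"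
  using \<Theta>_period[of t \<theta> 1 \<omega>] by simp

lemma \<Theta>_cont_on: "continuous_on A (\<lambda>s. \<Theta> s \<theta> \<omega>)"
  by (intro continuous_at_imp_continuous_on ballI \<Theta>_cont)

lemma \<Theta>_mono: assumes "\<theta>1 < \<theta>2" shows "\<Theta> t \<theta>1 \<omega> < \<Theta> t \<theta>2 \<omega>"
proof (rule ccontr)
  assume "\<not> ?thesis"
  then have le: "\<Theta> t \<theta>2 \<omega> - \<Theta> t \<theta>1 \<omega> \<le> 0" by simp
  define d where "d s = \<Theta> s \<theta>2 \<omega> - \<Theta> s \<theta>1 \<omega>" for s
  have d0: "d 0 > 0" using assms by (simp add: d_def \<Theta>_init)
  have dc: "continuous_on A d" for A unfolding d_def by (intro continuous_intros \<Theta>_cont_on)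
  have "\<exists>s. d s = 0"
  proof (cases "0 \<le> t")
    case True
    then show ?thesis using IVT2'[of d t 0 0, OF _ _ True dc] le d0 by (auto simp: d_def)
  next
    case False
    then show ?thesis using IVT'[of d t 0 0, OF _ _ _ dc] le d0 by (auto simp: d_def)
  qed
  then obtain s where "d s = 0" by blast
  then have "\<theta>2 = \<theta>1" using \<Theta>_inj[of s \<theta>2 \<omega> \<theta>1] by (simp add: d_def)
  then show False using assms by simp
qed

definition bb :: "real \<Rightarrow> real \<Rightarrow> real \<Rightarrow> real" where
  "bb s \<theta> \<omega> = - K * (Cc s * cos (\<Theta> s \<theta> \<omega>) + Ss s * sin (\<Theta> s \<theta> \<omega>))"

lemma bb_cont: "isCont (\<lambda>s. bb s \<theta> \<omega>) t"
  unfolding bb_def by (intro continuous_intros Cc_cont Ss_cont \<Theta>_cont)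

lemma bb_bound: "\<bar>bb s \<theta> \<omega>\<bar> \<le> 2 * K"
proof -
  have a: "\<bar>Cc s * cos (\<Theta> s \<theta> \<omega>)\<bar> \<le> 1" unfolding abs_mult
    using Cc_bound[of s] abs_cos_le_one[of "\<Theta> s \<theta> \<omega>"] by (intro mult_le_one) auto
  have b: "\<bar>Ss s * sin (\<Theta> s \<theta> \<omega>)\<bar> \<le> 1" unfolding abs_mult
    using Ss_bound[of s] abs_sin_le_one[of "\<Theta> s \<theta> \<omega>"] by (intro mult_le_one) auto
  have "\<bar>Cc s * cos (\<Theta> s \<theta> \<omega>) + Ss s * sin (\<Theta> s \<theta> \<omega>)\<bar> \<le> 1 + 1"
    using a b abs_triangle_ineq[of "Cc s * cos (\<Theta> s \<theta> \<omega>)" "Ss s * sin (\<Theta> s \<theta> \<omega>)"] by linarith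
  then show ?thesis using K_pos by (simp add: bb_def abs_mult)
qed

definition Lf :: "real \<Rightarrow> real \<Rightarrow> real \<Rightarrow> real" where
  "Lf \<theta> \<omega> = (SOME F. \<forall>s. (F has_real_derivative bb s \<theta> \<omega>) (at s))"

definition LL :: "real \<Rightarrow> real \<Rightarrow> real \<Rightarrow> real" where
  "LL t \<theta> \<omega> = Lf \<theta> \<omega> t - Lf \<theta> \<omega> 0"

lemma Lf_deriv: "(Lf \<theta> \<omega> has_real_derivative bb s \<theta> \<omega>) (at s)"
proof -
  have "\<exists>F. \<forall>x::real. -\<infinity> < ereal x \<longrightarrow> ereal x < \<infinity> \<longrightarrow> (F has_vector_derivative bb x \<theta> \<omega>) (at x)"
    by (rule einterval_antiderivative) (auto intro: bb_cont)
  then have "\<exists>F. \<forall>s. (F has_real_derivative bb s \<theta> \<omega>) (at s)"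
    by (auto simp: has_real_derivative_iff_has_vector_derivative)
  then have "\<forall>s. (Lf \<theta> \<omega> has_real_derivative bb s \<theta> \<omega>) (at s)"
    unfolding Lf_def by (rule someI_ex)
  then show ?thesis by blast
qed

lemma LL_deriv: "((\<lambda>s. LL s \<theta> \<omega>) has_real_derivative bb t \<theta> \<omega>) (at t)"
  unfolding LL_def by (auto intro!: derivative_eq_intros Lf_deriv)

lemma LL_0[simp]: "LL 0 \<theta> \<omega> = 0" by (simp add: LL_def)

lemma LL_bound: "\<bar>LL t \<theta> \<omega>\<bar> \<le> 2 * K * \<bar>t\<bar>"
  using deriv_bound[of "\<lambda>s. LL s \<theta> \<omega>" "\<lambda>s. bb s \<theta> \<omega>" 0 t "2 * K"] LL_deriv bb_bound by simp

definition J :: "real \<Rightarrow> real \<Rightarrow> real \<Rightarrow> real" where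
  "J t \<theta> \<omega> = exp (LL t \<theta> \<omega>)"

lemma J_pos: "J t \<theta> \<omega> > 0" by (simp add: J_def)

lemma dq_facts:
  fixes h \<theta> \<omega> t :: real
  assumes h: "h \<noteq> 0"
  defines "q \<equiv> \<lambda>s. (\<Theta> s (\<theta> + h) \<omega> - \<Theta> s \<theta> \<omega>) / h"
  shows "\<And>s. q s > 0"
    and "\<And>s. \<bar>ln (q s)\<bar> \<le> 2 * K * \<bar>s\<bar>"
    and "\<bar>ln (q t) - LL t \<theta> \<omega>\<bar> \<le> 2 * K * exp (2 * K * \<bar>t\<bar>) * \<bar>t\<bar> * \<bar>h\<bar>"
proof -
  define X where "X s = \<Theta> s \<theta> \<omega>" for s
  define Y where "Y s = \<Theta> s (\<theta> + h) \<omega>" for s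
  have qXY: "q s = (Y s - X s) / h" for s by (simp add: q_def X_def Y_def)
  show qpos: "q s > 0" for s
  proof (cases "h > 0")
    case True
    then have "X s < Y s" unfolding X_def Y_def by (intro \<Theta>_mono) simp
    then show ?thesis using True by (simp add: qXY)
  next
    case False
    then have "h < 0" using h by simp
    then have "Y s < X s" unfolding X_def Y_def by (intro \<Theta>_mono) simp
    then show ?thesis using \<open>h < 0\<close> by (simp add: qXY divide_pos_neg divide_neg_neg)
  qed
  have XY: "Y s \<noteq> X s" for s using qpos[of s] by (auto simp: qXY)
  define a where "a s = (V s (Y s) \<omega> - V s (X s) \<omega>) / (Y s - X s)" for s
  have dq: "(q has_real_derivative (V s (Y s) \<omega> - V s (X s) \<omega>) / h) (at s)" for s
    unfolding q_def using h by (auto intro!: derivative_eq_intros \<Theta>_deriv simp: X_def Y_def)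
  have dlq: "((\<lambda>s. ln (q s)) has_real_derivative a s) (at s)" for s
  proof -
    have "((\<lambda>s. ln (q s)) has_real_derivative 1 / q s * ((V s (Y s) \<omega> - V s (X s) \<omega>) / h)) (at s)"
      by (rule DERIV_chain2[OF DERIV_ln_divide[OF qpos] dq])
    moreover have "1 / q s * ((V s (Y s) \<omega> - V s (X s) \<omega>) / h) = a s"
      using h XY[of s] by (simp add: qXY a_def field_simps)
    ultimately show ?thesis by simp
  qed
  have abound: "\<bar>a s\<bar> \<le> 2 * K" for s
  proof -
    have "\<bar>V s (Y s) \<omega> - V s (X s) \<omega>\<bar> \<le> 2 * K * \<bar>Y s - X s\<bar>" by (rule V_lip)
    moreover have "\<bar>a s\<bar> = \<bar>V s (Y s) \<omega> - V s (X s) \<omega>\<bar> / \<bar>Y s - X s\<bar>" by (simp only: a_def abs_divide)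
    moreover have "\<bar>Y s - X s\<bar> > 0" using XY[of s] by simp
    ultimately show ?thesis by (simp only: pos_divide_le_eq)
  qed
  have q0: "q 0 = 1" using h by (simp add: q_def \<Theta>_init)
  show lqb: "\<bar>ln (q s)\<bar> \<le> 2 * K * \<bar>s\<bar>" for s
    using deriv_bound[of "\<lambda>s. ln (q s)" a 0 s "2 * K"] dlq abound q0 by simp
  have diffb: "\<bar>a s - bb s \<theta> \<omega>\<bar> \<le> 2 * K * \<bar>Y s - X s\<bar>" for s
  proof -
    have "V s (Y s) \<omega> - V s (X s) \<omega> - bb s \<theta> \<omega> * (Y s - X s) =
       - K * (Cc s * (sin (Y s) - sin (X s) - cos (X s) * (Y s - X s)) - Ss s * (cos (Y s) - cos (X s) + sin (X s) * (Y s - X s)))"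
      by (simp add: V_def bb_def X_def algebra_simps)
    also have "\<bar>\<dots>\<bar> \<le> K * (1 * (Y s - X s)^2 + 1 * (Y s - X s)^2)"
    proof -
      have "\<bar>Cc s * (sin (Y s) - sin (X s) - cos (X s) * (Y s - X s)) - Ss s * (cos (Y s) - cos (X s) + sin (X s) * (Y s - X s))\<bar>
          \<le> \<bar>Cc s\<bar> * \<bar>sin (Y s) - sin (X s) - cos (X s) * (Y s - X s)\<bar> + \<bar>Ss s\<bar> * \<bar>cos (Y s) - cos (X s) + sin (X s) * (Y s - X s)\<bar>"
        by (metis abs_mult abs_triangle_ineq4)
      also have "\<dots> \<le> 1 * (Y s - X s)^2 + 1 * (Y s - X s)^2"
        using Cc_bound[of s] Ss_bound[of s] sin_taylor[of "Y s" "X s"] cos_taylor[of "Y s" "X s"]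
        by (intro add_mono mult_mono) auto
      finally show ?thesis using K_pos by (simp add: abs_mult)
    qed
    finally have "\<bar>V s (Y s) \<omega> - V s (X s) \<omega> - bb s \<theta> \<omega> * (Y s - X s)\<bar> \<le> 2 * K * \<bar>Y s - X s\<bar> * \<bar>Y s - X s\<bar>"
      by (simp add: power2_eq_square abs_mult_self_eq)
    moreover have "a s - bb s \<theta> \<omega> = (V s (Y s) \<omega> - V s (X s) \<omega> - bb s \<theta> \<omega> * (Y s - X s)) / (Y s - X s)"
      using XY[of s] by (simp add: a_def field_simps)
    moreover have "\<bar>Y s - X s\<bar> > 0" using XY[of s] by simp
    ultimately show ?thesis by (simp only: abs_divide pos_divide_le_eq)
  qed
  have "\<bar>(ln (q t) - LL t \<theta> \<omega>) - (ln (q 0) - LL 0 \<theta> \<omega>)\<bar> \<le> (2 * K * exp (2 * K * \<bar>t\<bar>) * \<bar>h\<bar>) * \<bar>t - 0\<bar>"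
  proof (rule deriv_bound[where f' = "\<lambda>s. a s - bb s \<theta> \<omega>"])
    show "((\<lambda>s. ln (q s) - LL s \<theta> \<omega>) has_real_derivative a s - bb s \<theta> \<omega>) (at s)" for s
      by (intro derivative_intros dlq LL_deriv)
    fix s assume s: "min 0 t \<le> s" "s \<le> max 0 t"
    have "Y s - X s = h * q s" using h by (simp add: qXY)
    then have "\<bar>Y s - X s\<bar> = \<bar>h\<bar> * \<bar>q s\<bar>" by (simp only: abs_mult)
    then have "\<bar>Y s - X s\<bar> = \<bar>h\<bar> * q s" using qpos[of s] by (simp only: abs_of_pos)
    also have "q s \<le> exp (2 * K * \<bar>t\<bar>)"
    proof -
      have st: "\<bar>s\<bar> \<le> \<bar>t\<bar>" using s by (simp add: min_def max_def split: if_splits)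
      have "2 * K * \<bar>s\<bar> \<le> 2 * K * \<bar>t\<bar>" using st K_pos by (simp add: mult_left_mono)
      then have "ln (q s) \<le> 2 * K * \<bar>t\<bar>"
        using lqb[of s] abs_ge_self[of "ln (q s)"] by linarith
      then have "exp (ln (q s)) \<le> exp (2 * K * \<bar>t\<bar>)" by simp
      then show ?thesis using qpos[of s] by simp
    qed
    then have "\<bar>h\<bar> * q s \<le> \<bar>h\<bar> * exp (2 * K * \<bar>t\<bar>)" by (intro mult_left_mono) auto
    finally have "\<bar>Y s - X s\<bar> \<le> \<bar>h\<bar> * exp (2 * K * \<bar>t\<bar>)" .
    then show "\<bar>a s - bb s \<theta> \<omega>\<bar> \<le> 2 * K * exp (2 * K * \<bar>t\<bar>) * \<bar>h\<bar>"
    proof -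
      have "2 * K * \<bar>Y s - X s\<bar> \<le> 2 * K * (\<bar>h\<bar> * exp (2 * K * \<bar>t\<bar>))"
        using \<open>\<bar>Y s - X s\<bar> \<le> \<bar>h\<bar> * exp (2 * K * \<bar>t\<bar>)\<close> K_pos by (intro mult_left_mono) auto
      then show ?thesis using diffb[of s] by (simp add: ac_simps)
    qed
  qed
  then show "\<bar>ln (q t) - LL t \<theta> \<omega>\<bar> \<le> 2 * K * exp (2 * K * \<bar>t\<bar>) * \<bar>t\<bar> * \<bar>h\<bar>"
    using q0 by (simp add: ac_simps)
qed

end



context kur begin

lemma \<Theta>_meas_comp[measurable]:
  assumes [measurable]: "g1 \<in> borel_measurable N" "g2 \<in> borel_measurable N"
  shows "(\<lambda>x. \<Theta> t (g1 x) (g2 x)) \<in> borel_measurable N"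
proof -
  have "(\<lambda>x. (g1 x, g2 x)) \<in> measurable N (borel \<Otimes>\<^sub>M borel)" by measurable
  from measurable_compose[OF this \<Theta>_meas2[of t]] show ?thesis by simp
qed

lemma \<Theta>_dtheta: "((\<lambda>\<theta>'. \<Theta> t \<theta>' \<omega>) has_real_derivative J t \<theta> \<omega>) (at \<theta>)"
proof -
  define q where "q h = (\<Theta> t (\<theta> + h) \<omega> - \<Theta> t \<theta> \<omega>) / h" for h
  define C where "C = 2 * K * exp (2 * K * \<bar>t\<bar>) * \<bar>t\<bar>"
  have ev: "\<forall>\<^sub>F h in at 0. h \<noteq> (0::real)" by (simp add: eventually_at_filter)
  have "((\<lambda>h. ln (q h) - LL t \<theta> \<omega>) \<longlongrightarrow> 0) (at 0)"
  proof (rule Lim_null_comparison)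
    show "\<forall>\<^sub>F h in at 0. norm (ln (q h) - LL t \<theta> \<omega>) \<le> C * \<bar>h\<bar>"
      using ev by eventually_elim (use dq_facts(3) in \<open>simp add: q_def C_def\<close>)
    have "((\<lambda>h. C * \<bar>h\<bar>) \<longlongrightarrow> C * \<bar>0\<bar>) (at (0::real))"
      by (intro tendsto_intros)
    then show "((\<lambda>h. C * \<bar>h\<bar>) \<longlongrightarrow> 0) (at 0)" by simp
  qed
  then have "((\<lambda>h. ln (q h)) \<longlongrightarrow> LL t \<theta> \<omega>) (at 0)"
    by (simp add: LIM_zero_iff)
  then have "((\<lambda>h. exp (ln (q h))) \<longlongrightarrow> exp (LL t \<theta> \<omega>)) (at 0)"
    by (rule tendsto_exp)
  moreover have "\<forall>\<^sub>F h in at 0. exp (ln (q h)) = q h"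
    using ev by eventually_elim (use dq_facts(1) in \<open>simp add: q_def\<close>)
  ultimately have "(q \<longlongrightarrow> J t \<theta> \<omega>) (at 0)"
    unfolding J_def by (rule Lim_transform_eventually)
  then show ?thesis unfolding DERIV_def q_def .
qed

lemma J_le: "J s \<theta> \<omega> \<le> exp (2 * K * \<bar>s\<bar>)"
  unfolding J_def using LL_bound[of s \<theta> \<omega>] by simp

lemma \<Theta>_lip: "\<bar>\<Theta> s \<theta>2 \<omega> - \<Theta> s \<theta>1 \<omega>\<bar> \<le> exp (2 * K * \<bar>s\<bar>) * \<bar>\<theta>2 - \<theta>1\<bar>"
  by (rule deriv_bound[of "\<lambda>\<theta>'. \<Theta> s \<theta>' \<omega>" "\<lambda>\<theta>'. J s \<theta>' \<omega>"])
     (use \<Theta>_dtheta J_le J_pos in \<open>auto simp: abs_of_pos\<close>)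

lemma bb_lip: "\<bar>bb s \<theta>1 \<omega> - bb s \<theta>2 \<omega>\<bar> \<le> 2 * K * \<bar>\<Theta> s \<theta>1 \<omega> - \<Theta> s \<theta>2 \<omega>\<bar>"
proof -
  define A where "A = \<Theta> s \<theta>1 \<omega>"
  define B where "B = \<Theta> s \<theta>2 \<omega>"
  have "bb s \<theta>1 \<omega> - bb s \<theta>2 \<omega> = - K * (Cc s * (cos A - cos B) + Ss s * (sin A - sin B))"
    by (simp add: bb_def A_def B_def algebra_simps)
  then have "\<bar>bb s \<theta>1 \<omega> - bb s \<theta>2 \<omega>\<bar> = K * \<bar>Cc s * (cos A - cos B) + Ss s * (sin A - sin B)\<bar>"
    using K_pos by (simp add: abs_mult)
  also have "\<dots> \<le> K * (\<bar>A - B\<bar> + \<bar>A - B\<bar>)"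
  proof (rule mult_left_mono)
    have "\<bar>Cc s * (cos A - cos B)\<bar> \<le> 1 * \<bar>A - B\<bar>" unfolding abs_mult
      using Cc_bound[of s] cos_lip[of A B] by (intro mult_mono) auto
    moreover have "\<bar>Ss s * (sin A - sin B)\<bar> \<le> 1 * \<bar>A - B\<bar>" unfolding abs_mult
      using Ss_bound[of s] sin_lip[of A B] by (intro mult_mono) auto
    ultimately show "\<bar>Cc s * (cos A - cos B) + Ss s * (sin A - sin B)\<bar> \<le> \<bar>A - B\<bar> + \<bar>A - B\<bar>"
      using abs_triangle_ineq[of "Cc s * (cos A - cos B)" "Ss s * (sin A - sin B)"] by linarith
  qed (use K_pos in simp)
  finally show ?thesis by (simp add: A_def B_def)
qed

lemma LL_lip: "\<bar>LL t \<theta>1 \<omega> - LL t \<theta>2 \<omega>\<bar> \<le> (2 * K * exp (2 * K * \<bar>t\<bar>) * \<bar>t\<bar>) * \<bar>\<theta>1 - \<theta>2\<bar>"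
proof -
  have "\<bar>(LL t \<theta>1 \<omega> - LL t \<theta>2 \<omega>) - (LL 0 \<theta>1 \<omega> - LL 0 \<theta>2 \<omega>)\<bar> \<le> (2 * K * exp (2 * K * \<bar>t\<bar>) * \<bar>\<theta>1 - \<theta>2\<bar>) * \<bar>t - 0\<bar>"
  proof (rule deriv_bound[where f' = "\<lambda>s. bb s \<theta>1 \<omega> - bb s \<theta>2 \<omega>"])
    show "((\<lambda>s. LL s \<theta>1 \<omega> - LL s \<theta>2 \<omega>) has_real_derivative bb s \<theta>1 \<omega> - bb s \<theta>2 \<omega>) (at s)" for s
      by (intro derivative_intros LL_deriv)
    fix s assume s: "min 0 t \<le> s" "s \<le> max 0 t"
    have st: "\<bar>s\<bar> \<le> \<bar>t\<bar>" using s by (simp add: min_def max_def split: if_splits)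
    have "exp (2 * K * \<bar>s\<bar>) \<le> exp (2 * K * \<bar>t\<bar>)" using st K_pos by (simp add: mult_left_mono)
    then have "\<bar>\<Theta> s \<theta>1 \<omega> - \<Theta> s \<theta>2 \<omega>\<bar> \<le> exp (2 * K * \<bar>t\<bar>) * \<bar>\<theta>1 - \<theta>2\<bar>"
      using \<Theta>_lip[of s \<theta>1 \<omega> \<theta>2] by (meson abs_ge_zero mult_right_mono order_trans)
    then have "2 * K * \<bar>\<Theta> s \<theta>1 \<omega> - \<Theta> s \<theta>2 \<omega>\<bar> \<le> 2 * K * (exp (2 * K * \<bar>t\<bar>) * \<bar>\<theta>1 - \<theta>2\<bar>)"
      using K_pos by (simp add: mult_left_mono)
    then show "\<bar>bb s \<theta>1 \<omega> - bb s \<theta>2 \<omega>\<bar> \<le> 2 * K * exp (2 * K * \<bar>t\<bar>) * \<bar>\<theta>1 - \<theta>2\<bar>"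
      using bb_lip[of s \<theta>1 \<omega> \<theta>2] by (simp add: ac_simps)
  qed
  then show ?thesis by (simp add: ac_simps)
qed

lemma LL_cont: "continuous_on UNIV (\<lambda>\<theta>. LL t \<theta> \<omega>)"
proof (rule lipschitz_on_continuous_on)
  show "(2 * K * exp (2 * K * \<bar>t\<bar>) * \<bar>t\<bar>)-lipschitz_on UNIV (\<lambda>\<theta>. LL t \<theta> \<omega>)"
    unfolding lipschitz_on_def dist_real_def using K_pos LL_lip by auto
qed

lemma J_cont: "continuous_on UNIV (\<lambda>\<theta>. J t \<theta> \<omega>)"
  unfolding J_def by (intro continuous_intros LL_cont)

lemma J_period: "J t (\<theta> + 2 * pi * of_int k) \<omega> = J t \<theta> \<omega>"
proof -
  have "((\<lambda>\<theta>'. \<Theta> t (\<theta>' + 2 * pi * of_int k) \<omega>) has_real_derivative J t (\<theta> + 2 * pi * of_int k) \<omega> * 1) (at \<theta>)"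
    by (rule DERIV_chain2[OF \<Theta>_dtheta]) (auto intro!: derivative_eq_intros)
  moreover have "((\<lambda>\<theta>'. \<Theta> t (\<theta>' + 2 * pi * of_int k) \<omega>) has_real_derivative J t \<theta> \<omega>) (at \<theta>)"
    unfolding \<Theta>_period by (auto intro!: derivative_eq_intros \<Theta>_dtheta)
  ultimately show ?thesis using DERIV_unique by fastforce
qed

lemma J_meas[measurable]: "(\<lambda>x. J t (fst x) (snd x)) \<in> borel_measurable (borel \<Otimes>\<^sub>M borel)"
proof (rule borel_measurable_LIMSEQ_real)
  fix x :: "real \<times> real"
  have lim: "((\<lambda>h. (\<Theta> t (fst x + h) (snd x) - \<Theta> t (fst x) (snd x)) / h) \<longlongrightarrow> J t (fst x) (snd x)) (at 0)"
    using \<Theta>_dtheta[of t "snd x" "fst x"] unfolding DERIV_def .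
  have X: "(\<lambda>n. inverse (real (Suc n))) \<longlonglongrightarrow> 0" by (rule LIMSEQ_inverse_real_of_nat)
  have "((\<lambda>h. (\<Theta> t (fst x + h) (snd x) - \<Theta> t (fst x) (snd x)) / h) \<circ> (\<lambda>n. inverse (real (Suc n)))) \<longlonglongrightarrow> J t (fst x) (snd x)"
    using lim X unfolding tendsto_at_iff_sequentially by auto
  then show "(\<lambda>n. (\<Theta> t (fst x + inverse (real (Suc n))) (snd x) - \<Theta> t (fst x) (snd x)) / inverse (real (Suc n))) \<longlonglongrightarrow> J t (fst x) (snd x)"
    by (simp add: comp_def)
qed measurable

lemma LL_meas[measurable]: "(\<lambda>x. LL t (fst x) (snd x)) \<in> borel_measurable (borel \<Otimes>\<^sub>M borel)"
proof -
  have "(\<lambda>x. ln (J t (fst x) (snd x))) \<in> borel_measurable (borel \<Otimes>\<^sub>M borel)" by measurable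
  then show ?thesis by (simp add: J_def)
qed

end



context kur begin

lemma \<Theta>_theta_cont: "continuous_on A (\<lambda>\<theta>. \<Theta> t \<theta> \<omega>)"
  by (intro continuous_at_imp_continuous_on ballI DERIV_isCont[OF \<Theta>_dtheta])

lemma \<Theta>_mono_iff: "\<Theta> t a \<omega> \<le> \<Theta> t b \<omega> \<longleftrightarrow> a \<le> b"
  using \<Theta>_mono[of a b t \<omega>] \<Theta>_mono[of b a t \<omega>] by (cases a b rule: linorder_cases) auto

lemma \<Theta>_surj: "\<exists>\<theta>. \<Theta> t \<theta> \<omega> = y"
proof -
  define y0 where "y0 = \<Theta> t 0 \<omega>"
  define k where "k = \<lfloor>(y - y0) / (2 * pi)\<rfloor>"
  have p: "0 < 2 * pi" using pi_gt_zero by simp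
  have "of_int k \<le> (y - y0) / (2 * pi)" "(y - y0) / (2 * pi) < of_int k + 1" unfolding k_def by linarith+
  then have a: "of_int k * (2 * pi) \<le> y - y0" "y - y0 < (of_int k + 1) * (2 * pi)"
    using pos_le_divide_eq[OF p] pos_divide_less_eq[OF p] by blast+
  have e1: "\<Theta> t (0 + 2 * pi * of_int k) \<omega> = y0 + 2 * pi * of_int k" unfolding y0_def by (rule \<Theta>_period)
  have e2: "\<Theta> t (0 + 2 * pi * of_int (k + 1)) \<omega> = y0 + 2 * pi * of_int (k + 1)" unfolding y0_def by (rule \<Theta>_period)
  have "\<exists>x. 2 * pi * of_int k \<le> x \<and> x \<le> 2 * pi * of_int (k + 1) \<and> \<Theta> t x \<omega> = y"
    by (rule IVT'[OF _ _ _ \<Theta>_theta_cont]) (use e1 e2 a p in \<open>auto simp: algebra_simps\<close>)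
  then show ?thesis by blast
qed

definition \<Psi> :: "real \<Rightarrow> real \<Rightarrow> real \<Rightarrow> real" where
  "\<Psi> t y \<omega> = (THE \<theta>. \<Theta> t \<theta> \<omega> = y)"

lemma \<Psi>_eq[simp]: "\<Theta> t (\<Psi> t y \<omega>) \<omega> = y"
  unfolding \<Psi>_def by (rule theI') (use \<Theta>_surj \<Theta>_inj in blast)

lemma \<Psi>_inv[simp]: "\<Psi> t (\<Theta> t \<theta> \<omega>) \<omega> = \<theta>"
  unfolding \<Psi>_def by (rule the_equality) (auto dest: \<Theta>_inj)

lemma \<Psi>_shift: "\<Psi> t (y + 2 * pi * of_int k) \<omega> = \<Psi> t y \<omega> + 2 * pi * of_int k"
proof -
  have "y + 2 * pi * of_int k = \<Theta> t (\<Psi> t y \<omega> + 2 * pi * of_int k) \<omega>" by (simp add: \<Theta>_period)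
  then show ?thesis by simp
qed

lemma \<Psi>_le_iff: "\<Psi> t y \<omega> \<le> c \<longleftrightarrow> y \<le> \<Theta> t c \<omega>"
  using \<Theta>_mono_iff[of t "\<Psi> t y \<omega>" \<omega> c] by simp

lemma \<Psi>_meas2: "(\<lambda>x. \<Psi> t (fst x) (snd x)) \<in> borel_measurable (borel \<Otimes>\<^sub>M borel)"
  unfolding borel_measurable_iff_le
proof
  fix c
  have "{w \<in> space (borel \<Otimes>\<^sub>M borel). \<Psi> t (fst w) (snd w) \<le> c} = {w \<in> space (borel \<Otimes>\<^sub>M borel). fst w \<le> \<Theta> t c (snd w)}"
    by (simp add: \<Psi>_le_iff)
  also have "\<dots> \<in> sets (borel \<Otimes>\<^sub>M borel)" by measurable
  finally show "{w \<in> space (borel \<Otimes>\<^sub>M borel). \<Psi> t (fst w) (snd w) \<le> c} \<in> sets (borel \<Otimes>\<^sub>M borel)" .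
qed

lemma \<Psi>_meas_comp[measurable]:
  assumes [measurable]: "g1 \<in> borel_measurable N" "g2 \<in> borel_measurable N"
  shows "(\<lambda>x. \<Psi> t (g1 x) (g2 x)) \<in> borel_measurable N"
proof -
  have "(\<lambda>x. (g1 x, g2 x)) \<in> measurable N (borel \<Otimes>\<^sub>M borel)" by measurable
  from measurable_compose[OF this \<Psi>_meas2[of t]] show ?thesis by simp
qed

lemma J_meas_comp[measurable]:
  assumes [measurable]: "g1 \<in> borel_measurable N" "g2 \<in> borel_measurable N"
  shows "(\<lambda>x. J t (g1 x) (g2 x)) \<in> borel_measurable N"
proof -
  have "(\<lambda>x. (g1 x, g2 x)) \<in> measurable N (borel \<Otimes>\<^sub>M borel)" by measurable
  from measurable_compose[OF this J_meas[of t]] show ?thesis by simp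
qed

lemma f0_meas_comp[measurable]:
  assumes [measurable]: "g1 \<in> borel_measurable N" "g2 \<in> borel_measurable N"
  shows "(\<lambda>x. f0 (g1 x, g2 x)) \<in> borel_measurable N"
proof -
  have "(\<lambda>x. (g1 x, g2 x)) \<in> measurable N (borel \<Otimes>\<^sub>M borel)" by measurable
  from measurable_compose[OF this f0_meas2] show ?thesis by simp
qed

lemma Tstrip_sets[measurable]: "Tstrip \<in> sets (borel \<Otimes>\<^sub>M borel)"
  unfolding Tstrip_def by (rule pair_measureI) auto

definition ft :: "real \<Rightarrow> real \<times> real \<Rightarrow> real" where
  "ft t y = indicator Tstrip y * (f0 (wrap (\<Psi> t (fst y) (snd y)), snd y) / J t (\<Psi> t (fst y) (snd y)) (snd y))"

lemma ft_meas[measurable]: "ft t \<in> borel_measurable (borel \<Otimes>\<^sub>M borel)"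
  unfolding ft_def[abs_def] by measurable

lemma ft_meas_b[measurable]: "ft t \<in> borel_measurable borel"
  unfolding lbp1 by (rule ft_meas)

lemma ft_nonneg: "ft t y \<ge> 0"
  unfolding ft_def using f0_nonneg J_pos by (auto intro!: divide_nonneg_pos)

lemma ft_supp: "y \<notin> Tstrip \<Longrightarrow> ft t y = 0"
  unfolding ft_def by simp

lemma Tstrip_iff: "(a, b) \<in> Tstrip \<longleftrightarrow> 0 \<le> a \<and> a < 2 * pi"
  by (simp add: Tstrip_def)

lemma ennreal_div_mult: "b > 0 \<Longrightarrow> a \<ge> 0 \<Longrightarrow> ennreal (a / b) * ennreal b = ennreal a"
  by (simp add: ennreal_mult[symmetric])

lemma key_omega:
  assumes [measurable]: "g \<in> borel_measurable (borel \<Otimes>\<^sub>M borel)"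
  shows "(\<integral>\<^sup>+\<theta>. ennreal (f0 (\<theta>, \<omega>)) * g (Phi t (\<theta>, \<omega>)) \<partial>lborel) = (\<integral>\<^sup>+y. ennreal (ft t (y, \<omega>)) * g (y, \<omega>) \<partial>lborel)"
proof -
  define G where "G y = ennreal (f0 (wrap (\<Psi> t y \<omega>), \<omega>) / J t (\<Psi> t y \<omega>) \<omega>) * g (wrap y, \<omega>)" for y
  have [measurable]: "G \<in> borel_measurable borel" unfolding G_def[abs_def] by measurable
  have Gper: "G (y + 2 * pi) = G y" for y
    using \<Psi>_shift[of t y 1 \<omega>] wrap_shift[of "\<Psi> t y \<omega>" 1] wrap_shift[of y 1] J_period[of t "\<Psi> t y \<omega>" 1 \<omega>]
    by (simp add: G_def)
  have "(\<integral>\<^sup>+\<theta>. ennreal (f0 (\<theta>, \<omega>)) * g (Phi t (\<theta>, \<omega>)) \<partial>lborel)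
      = (\<integral>\<^sup>+\<theta>. G (\<Theta> t \<theta> \<omega>) * ennreal (J t \<theta> \<omega>) * indicator {0..2 * pi} \<theta> \<partial>lborel)"
  proof (rule nn_integral_cong_AE)
    show "AE \<theta> in lborel. ennreal (f0 (\<theta>, \<omega>)) * g (Phi t (\<theta>, \<omega>)) = G (\<Theta> t \<theta> \<omega>) * ennreal (J t \<theta> \<omega>) * indicator {0..2 * pi} \<theta>"
      using AE_lborel_singleton[of "2 * pi"]
    proof eventually_elim
      case (elim \<theta>)
      show ?case
      proof (cases "0 \<le> \<theta> \<and> \<theta> < 2 * pi")
        case True
        have "G (\<Theta> t \<theta> \<omega>) * ennreal (J t \<theta> \<omega>) = ennreal (f0 (\<theta>, \<omega>) / J t \<theta> \<omega>) * ennreal (J t \<theta> \<omega>) * g (Phi t (\<theta>, \<omega>))"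
          using True by (simp add: G_def wrap_id Phi_def ac_simps)
        also have "\<dots> = ennreal (f0 (\<theta>, \<omega>)) * g (Phi t (\<theta>, \<omega>))"
          using J_pos f0_nonneg by (simp add: ennreal_div_mult)
        finally show ?thesis using True by simp
      next
        case False
        then have "(\<theta>, \<omega>) \<notin> Tstrip" by (simp add: Tstrip_iff)
        then have "f0 (\<theta>, \<omega>) = 0" by (rule f0_supp)
        moreover have "\<theta> \<notin> {0..2 * pi}" using False elim by auto
        ultimately show ?thesis by simp
      qed
    qed
  qed
  also have "\<dots> = (\<integral>\<^sup>+y. G y * indicator {\<Theta> t 0 \<omega>..\<Theta> t (2 * pi) \<omega>} y \<partial>lborel)"
    by (rule subst_enn[symmetric]) (auto intro: \<Theta>_dtheta J_cont less_imp_le[OF J_pos])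
  also have "\<dots> = (\<integral>\<^sup>+y. G y * indicator {\<Theta> t 0 \<omega>..<\<Theta> t 0 \<omega> + 2 * pi} y \<partial>lborel)"
  proof (rule nn_integral_cong_AE)
    have e: "\<Theta> t (2 * pi) \<omega> = \<Theta> t 0 \<omega> + 2 * pi" using \<Theta>_period1[of t 0 \<omega>] by simp
    show "AE y in lborel. G y * indicator {\<Theta> t 0 \<omega>..\<Theta> t (2 * pi) \<omega>} y = G y * indicator {\<Theta> t 0 \<omega>..<\<Theta> t 0 \<omega> + 2 * pi} y"
      using AE_lborel_singleton[of "\<Theta> t 0 \<omega> + 2 * pi"] by eventually_elim (auto simp: e indicator_def)
  qed
  also have "\<dots> = (\<integral>\<^sup>+y. G y * indicator {0..<2 * pi} y \<partial>lborel)"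
    by (rule window) (use Gper pi_gt_zero in auto)
  also have "\<dots> = (\<integral>\<^sup>+y. ennreal (ft t (y, \<omega>)) * g (y, \<omega>) \<partial>lborel)"
  proof (rule nn_integral_cong)
    fix y :: real
    show "G y * indicator {0..<2 * pi} y = ennreal (ft t (y, \<omega>)) * g (y, \<omega>)"
    proof (cases "0 \<le> y \<and> y < 2 * pi")
      case True
      then show ?thesis by (simp add: G_def ft_def wrap_id Tstrip_iff)
    next
      case False
      then show ?thesis by (simp add: ft_def Tstrip_iff)
    qed
  qed
  finally show ?thesis .
qed

lemma key:
  assumes [measurable]: "g \<in> borel_measurable (borel \<Otimes>\<^sub>M borel)"
  shows "(\<integral>\<^sup>+x. ennreal (f0 x) * g (Phi t x) \<partial>lborel) = (\<integral>\<^sup>+y. ennreal (ft t y) * g y \<partial>lborel)"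
proof -
  have Phim[measurable]: "Phi t \<in> measurable (borel \<Otimes>\<^sub>M borel) (borel \<Otimes>\<^sub>M borel)"
    unfolding Phi_def[abs_def] by measurable
  have "(\<integral>\<^sup>+x. ennreal (f0 x) * g (Phi t x) \<partial>lborel) = (\<integral>\<^sup>+x. ennreal (f0 x) * g (Phi t x) \<partial>(lborel \<Otimes>\<^sub>M lborel))"
    by (simp add: lborel_prod)
  also have "\<dots> = (\<integral>\<^sup>+\<omega>. (\<integral>\<^sup>+\<theta>. ennreal (f0 (\<theta>, \<omega>)) * g (Phi t (\<theta>, \<omega>)) \<partial>lborel) \<partial>lborel)"
    by (rule lborel_pair.nn_integral_snd[symmetric]) measurable
  also have "\<dots> = (\<integral>\<^sup>+\<omega>. (\<integral>\<^sup>+y. ennreal (ft t (y, \<omega>)) * g (y, \<omega>) \<partial>lborel) \<partial>lborel)"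
    by (intro nn_integral_cong key_omega) measurable
  also have "\<dots> = (\<integral>\<^sup>+y. ennreal (ft t y) * g y \<partial>(lborel \<Otimes>\<^sub>M lborel))"
    by (rule lborel_pair.nn_integral_snd) measurable
  also have "\<dots> = (\<integral>\<^sup>+y. ennreal (ft t y) * g y \<partial>lborel)"
    by (simp add: lborel_prod)
  finally show ?thesis .
qed

lemma \<mu>_density: "\<mu> t = density lborel (\<lambda>x. ennreal (ft t x))"
proof (rule measure_eqI)
  show "sets (\<mu> t) = sets (density lborel (\<lambda>x. ennreal (ft t x)))" by (simp add: \<mu>_Phi)
  fix A assume "A \<in> sets (\<mu> t)"
  then have Ab: "A \<in> sets borel" by (simp add: \<mu>_Phi)
  then have A[measurable]: "A \<in> sets (borel \<Otimes>\<^sub>M borel)" unfolding borel_prod .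
  have PhiM: "Phi t \<in> measurable lborel lborel" by (rule Phi_meas)
  have ftm: "(\<lambda>x. ennreal (ft t x)) \<in> borel_measurable borel" by measurable
  have "emeasure (\<mu> t) A = emeasure (density lborel (\<lambda>x. ennreal (f0 x))) (Phi t -` A \<inter> space lborel)"
    unfolding \<mu>_Phi using PhiM Ab by (subst emeasure_distr) auto
  also have "\<dots> = (\<integral>\<^sup>+x. ennreal (f0 x) * indicator (Phi t -` A \<inter> space lborel) x \<partial>lborel)"
    by (rule emeasure_density) (use PhiM Ab f0_meas measurable_sets[of "Phi t" lborel lborel A] in auto)
  also have "\<dots> = (\<integral>\<^sup>+x. ennreal (f0 x) * indicator A (Phi t x) \<partial>lborel)"
    by (intro nn_integral_cong) (simp add: indicator_def)
  also have "\<dots> = (\<integral>\<^sup>+y. ennreal (ft t y) * indicator A y \<partial>lborel)"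
    by (rule key) measurable
  also have "\<dots> = emeasure (density lborel (\<lambda>x. ennreal (ft t x))) A"
    by (rule emeasure_density[symmetric]) (use Ab ftm in auto)
  finally show "emeasure (\<mu> t) A = emeasure (density lborel (\<lambda>x. ennreal (ft t x))) A" .
qed

end



context kur begin

lemma ft_Phi: "f0 x * ln (ft t (Phi t x)) = f0 x * ln (f0 x) - f0 x * LL t (fst x) (snd x)"
proof (cases "f0 x = 0")
  case True then show ?thesis by simp
next
  case False
  obtain \<theta> \<omega> where x: "x = (\<theta>, \<omega>)" by (cases x)
  have xs: "x \<in> Tstrip" using False f0_supp by blast
  then have th: "0 \<le> \<theta>" "\<theta> < 2 * pi" by (auto simp: x Tstrip_iff)
  obtain k where k: "wrap (\<Theta> t \<theta> \<omega>) = \<Theta> t \<theta> \<omega> + 2 * pi * of_int k" using wrap_eq by blast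
  have ps: "\<Psi> t (wrap (\<Theta> t \<theta> \<omega>)) \<omega> = \<theta> + 2 * pi * of_int k"
    unfolding k \<Psi>_shift by simp
  have "wrap (\<theta> + 2 * pi * of_int k) = \<theta>" using th by (simp add: wrap_shift wrap_id)
  then have "ft t (Phi t x) = f0 x / J t \<theta> \<omega>"
    using wrap_range[of "\<Theta> t \<theta> \<omega>"] by (simp add: ft_def Phi_def x ps Tstrip_iff J_period)
  moreover have "f0 x > 0" using False f0_nonneg[of x] by simp
  ultimately have "ln (ft t (Phi t x)) = ln (f0 x) - LL t \<theta> \<omega>"
    using J_pos[of t \<theta> \<omega>] by (simp add: ln_div J_def)
  then have "f0 x * ln (ft t (Phi t x)) = f0 x * (ln (f0 x) - LL t \<theta> \<omega>)" by simp
  then show ?thesis by (simp add: x right_diff_distrib)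
qed

lemma int_f0lnf0: "integrable lborel (\<lambda>x. f0 x * ln (f0 x))"
proof (rule Bochner_Integration.integrable_bound[OF f0_entropy])
  show "(\<lambda>x. f0 x * ln (f0 x)) \<in> borel_measurable lborel" using f0_meas by measurable
  show "AE x in lborel. norm (f0 x * ln (f0 x)) \<le> norm (f0 x * \<bar>ln (f0 x)\<bar>)"
    using f0_nonneg by (simp add: abs_mult)
qed

lemma LL_meas_b[measurable]: "(\<lambda>x. LL t (fst x) (snd x)) \<in> borel_measurable lborel"
  unfolding measurable_lborel2 lbp1 by (rule LL_meas)

lemma int_f0LL: "integrable lborel (\<lambda>x. f0 x * LL t (fst x) (snd x))"
proof (rule Bochner_Integration.integrable_bound)
  show "integrable lborel (\<lambda>x. f0 x * (2 * K * \<bar>t\<bar>))" using f0_int by simp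
  show "(\<lambda>x. f0 x * LL t (fst x) (snd x)) \<in> borel_measurable lborel" using f0_meas by measurable
  show "AE x in lborel. norm (f0 x * LL t (fst x) (snd x)) \<le> norm (f0 x * (2 * K * \<bar>t\<bar>))"
    using f0_nonneg LL_bound K_pos by (auto simp: abs_mult intro!: mult_left_mono)
qed

lemma ft_ln_meas: "(\<lambda>y. ln (ft t y)) \<in> borel_measurable lborel"
  using ft_meas_b by measurable

lemma ft_integrable: "integrable lborel (\<lambda>y. ft t y * ln (ft t y))"
proof -
  have "integrable lborel (\<lambda>x. f0 x * ln (f0 x) - f0 x * LL t (fst x) (snd x))"
    using int_f0lnf0 int_f0LL by simp
  then have "integrable lborel (\<lambda>x. f0 x *\<^sub>R ln (ft t (Phi t x)))"
    by (simp add: ft_Phi)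
  then have "integrable (density lborel (\<lambda>x. ennreal (f0 x))) (\<lambda>x. ln (ft t (Phi t x)))"
    using Phi_meas[of t] ft_ln_meas f0_meas f0_nonneg
    by (subst integrable_density) (auto intro: measurable_compose)
  then have "integrable (\<mu> t) (\<lambda>y. ln (ft t y))"
    unfolding \<mu>_Phi using Phi_meas[of t] ft_ln_meas by (subst integrable_distr_eq) auto
  then have "integrable (density lborel (\<lambda>x. ennreal (ft t x))) (\<lambda>y. ln (ft t y))"
    by (simp add: \<mu>_density)
  then show ?thesis
    using ft_ln_meas ft_meas_b ft_nonneg by (subst (asm) integrable_density) auto
qed

definition Mt :: "real \<Rightarrow> real" where
  "Mt t = (\<integral>x. f0 x * LL t (fst x) (snd x) \<partial>lborel)"

lemma entropy_eq: "entropy (ft t) = (\<integral>x. f0 x * ln (f0 x) \<partial>lborel) - Mt t"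
proof -
  have "entropy (ft t) = integral\<^sup>L (density lborel (\<lambda>x. ennreal (ft t x))) (\<lambda>y. ln (ft t y))"
    unfolding entropy_def using ft_ln_meas ft_meas_b ft_nonneg by (subst integral_density) auto
  also have "\<dots> = integral\<^sup>L (\<mu> t) (\<lambda>y. ln (ft t y))" by (simp add: \<mu>_density)
  also have "\<dots> = (\<integral>x. f0 x * ln (ft t (Phi t x)) \<partial>lborel)"
    by (rule int_mu) (rule ft_ln_meas)
  also have "\<dots> = (\<integral>x. f0 x * ln (f0 x) - f0 x * LL t (fst x) (snd x) \<partial>lborel)"
    by (simp add: ft_Phi)
  also have "\<dots> = (\<integral>x. f0 x * ln (f0 x) \<partial>lborel) - Mt t"
    using int_f0lnf0 int_f0LL by (simp add: Mt_def)
  finally show ?thesis .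
qed

lemma bb_meas_b[measurable]: "(\<lambda>x. bb t (fst x) (snd x)) \<in> borel_measurable lborel"
  unfolding measurable_lborel2 lbp1 bb_def by measurable

lemma Mt_deriv: "(Mt has_real_derivative (\<integral>x. f0 x * bb t (fst x) (snd x) \<partial>lborel)) (at t)"
  unfolding DERIV_def tendsto_at_iff_sequentially comp_def
proof (intro allI impI)
  fix X :: "nat \<Rightarrow> real" assume X0: "\<forall>i. X i \<in> UNIV - {0}" and X: "X \<longlonglongrightarrow> 0"
  have eq: "(Mt (t + X i) - Mt t) / X i = (\<integral>x. f0 x * ((LL (t + X i) (fst x) (snd x) - LL t (fst x) (snd x)) / X i) \<partial>lborel)" for i
  proof -
    have "Mt (t + X i) - Mt t = (\<integral>x. f0 x * LL (t + X i) (fst x) (snd x) - f0 x * LL t (fst x) (snd x) \<partial>lborel)"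
      unfolding Mt_def using int_f0LL by (simp add: Bochner_Integration.integral_diff)
    then show ?thesis by (simp add: right_diff_distrib)
  qed
  show "(\<lambda>i. (Mt (t + X i) - Mt t) / X i) \<longlonglongrightarrow> (\<integral>x. f0 x * bb t (fst x) (snd x) \<partial>lborel)"
    unfolding eq
  proof (rule integral_dominated_convergence[where w="\<lambda>x. 2 * K * f0 x"])
    show "(\<lambda>x. f0 x * bb t (fst x) (snd x)) \<in> borel_measurable lborel" using f0_meas by measurable
    show "(\<lambda>x. f0 x * ((LL (t + X i) (fst x) (snd x) - LL t (fst x) (snd x)) / X i)) \<in> borel_measurable lborel" for i
      using f0_meas by measurable
    show "integrable lborel (\<lambda>x. 2 * K * f0 x)" using f0_int by simp
    show "AE x in lborel. (\<lambda>i. f0 x * ((LL (t + X i) (fst x) (snd x) - LL t (fst x) (snd x)) / X i)) \<longlonglongrightarrow> f0 x * bb t (fst x) (snd x)"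
    proof (intro AE_I2 tendsto_mult tendsto_const)
      fix x :: "real \<times> real"
      have "((\<lambda>h. (LL (t + h) (fst x) (snd x) - LL t (fst x) (snd x)) / h) \<longlongrightarrow> bb t (fst x) (snd x)) (at 0)"
        using LL_deriv[of "fst x" "snd x" t] unfolding DERIV_def .
      then show "(\<lambda>i. (LL (t + X i) (fst x) (snd x) - LL t (fst x) (snd x)) / X i) \<longlonglongrightarrow> bb t (fst x) (snd x)"
        using X0 X unfolding tendsto_at_iff_sequentially comp_def by auto
    qed
    show "AE x in lborel. norm (f0 x * ((LL (t + X i) (fst x) (snd x) - LL t (fst x) (snd x)) / X i)) \<le> 2 * K * f0 x" for i
    proof (intro AE_I2)
      fix x :: "real \<times> real"
      have "\<bar>LL (t + X i) (fst x) (snd x) - LL t (fst x) (snd x)\<bar> \<le> 2 * K * \<bar>(t + X i) - t\<bar>"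
        using deriv_bound[of "\<lambda>s. LL s (fst x) (snd x)" "\<lambda>s. bb s (fst x) (snd x)" t "t + X i" "2 * K"]
          LL_deriv bb_bound by blast
      then have "\<bar>(LL (t + X i) (fst x) (snd x) - LL t (fst x) (snd x)) / X i\<bar> \<le> 2 * K"
        using X0 by (simp add: abs_divide pos_divide_le_eq)
      then have "f0 x * \<bar>(LL (t + X i) (fst x) (snd x) - LL t (fst x) (snd x)) / X i\<bar> \<le> f0 x * (2 * K)"
        by (intro mult_left_mono) (use f0_nonneg in auto)
      then show "norm (f0 x * ((LL (t + X i) (fst x) (snd x) - LL t (fst x) (snd x)) / X i)) \<le> 2 * K * f0 x"
        using f0_nonneg[of x] by (simp add: abs_mult ac_simps)
    qed
  qed
qed

lemma int_f0bb: "(\<integral>x. f0 x * bb t (fst x) (snd x) \<partial>lborel) = - K * ((Cc t)^2 + (Ss t)^2)"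
proof -
  have "(\<integral>x. f0 x * bb t (fst x) (snd x) \<partial>lborel) =
     (\<integral>x. (- K * Cc t) * (f0 x * cos (\<Theta> t (fst x) (snd x))) + (- K * Ss t) * (f0 x * sin (\<Theta> t (fst x) (snd x))) \<partial>lborel)"
    by (intro Bochner_Integration.integral_cong) (auto simp: bb_def algebra_simps)
  also have "\<dots> = (- K * Cc t) * Cc t + (- K * Ss t) * Ss t"
    using int_cos int_sin by (simp add: Cc_def Ss_def)
  finally show ?thesis by (simp add: power2_eq_square algebra_simps)
qed

lemma int_mu_c:
  fixes g :: "real \<times> real \<Rightarrow> complex"
  assumes "g \<in> borel_measurable lborel"
  shows "integral\<^sup>L (\<mu> t) g = (\<integral>x. f0 x *\<^sub>R g (Phi t x) \<partial>lborel)"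
proof -
  have "integral\<^sup>L (\<mu> t) g = integral\<^sup>L (density lborel (\<lambda>x. ennreal (f0 x))) (\<lambda>x. g (Phi t x))"
    unfolding \<mu>_Phi using Phi_meas[of t] assms by (subst integral_distr) auto
  also have "\<dots> = (\<integral>x. f0 x *\<^sub>R g (Phi t x) \<partial>lborel)"
    using Phi_meas[of t] assms f0_meas f0_nonneg by (subst integral_density) auto
  finally show ?thesis .
qed

lemma order_param_sq: "(order_param (\<mu> t))^2 = (Cc t)^2 + (Ss t)^2"
proof -
  have cisM: "cis \<in> borel_measurable borel"
    by (rule borel_measurable_continuous_onI) (auto intro: continuous_intros)
  have gm: "(\<lambda>y::real\<times>real. cis (fst y)) \<in> borel_measurable lborel"
    unfolding measurable_lborel2 lbp1 by (rule measurable_compose[OF measurable_fst cisM])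
  have [measurable]: "(\<lambda>x. cis (\<Theta> t (fst x) (snd x))) \<in> borel_measurable (borel \<Otimes>\<^sub>M borel)"
    by (rule measurable_compose[OF \<Theta>_meas2 cisM])
  have I: "(\<integral> y. cis (fst y) \<partial>\<mu> t) = (\<integral>x. f0 x *\<^sub>R cis (\<Theta> t (fst x) (snd x)) \<partial>lborel)"
    by (subst int_mu_c[OF gm]) (simp add: Phi_def cis.ctr)
  have int: "integrable lborel (\<lambda>x. f0 x *\<^sub>R cis (\<Theta> t (fst x) (snd x)))"
  proof (rule Bochner_Integration.integrable_bound[OF f0_int])
    show "(\<lambda>x. f0 x *\<^sub>R cis (\<Theta> t (fst x) (snd x))) \<in> borel_measurable lborel"
      unfolding measurable_lborel2 lbp1 by measurable
    show "AE x in lborel. norm (f0 x *\<^sub>R cis (\<Theta> t (fst x) (snd x))) \<le> norm (f0 x)"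
      using f0_nonneg by simp
  qed
  have "Re (\<integral> y. cis (fst y) \<partial>\<mu> t) = Cc t"
    unfolding I Cc_def using integral_Re[OF int, symmetric] by simp
  moreover have "Im (\<integral> y. cis (fst y) \<partial>\<mu> t) = Ss t"
    unfolding I Ss_def using integral_Im[OF int, symmetric] by simp
  ultimately show ?thesis unfolding order_param_def cmod_power2 by simp
qed

lemma entropy_deriv: "((\<lambda>s. entropy (ft s)) has_real_derivative K * (order_param (\<mu> t))\<^sup>2) (at t)"
proof -
  have "((\<lambda>s. (\<integral>x. f0 x * ln (f0 x) \<partial>lborel) - Mt s) has_real_derivative 0 - (\<integral>x. f0 x * bb t (fst x) (snd x) \<partial>lborel)) (at t)"
    by (intro derivative_intros Mt_deriv)
  then show ?thesis by (simp add: entropy_eq int_f0bb order_param_sq)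
qed

lemma entropy_mono: "mono (\<lambda>t. entropy (ft t))"
proof (rule monoI)
  fix a b :: real assume "a \<le> b"
  then show "entropy (ft a) \<le> entropy (ft b)"
  proof (rule DERIV_nonneg_imp_nondecreasing)
    fix x
    show "\<exists>y. ((\<lambda>t. entropy (ft t)) has_real_derivative y) (at x) \<and> 0 \<le> y"
      using entropy_deriv[of x] K_pos by auto
  qed
qed

end

theorem mainTheorem10:
  fixes K :: real
    and f0 :: "real \<times> real \<Rightarrow> real"
    and \<Theta> :: "real \<Rightarrow> real \<Rightarrow> real \<Rightarrow> real"
    and \<mu> :: "real \<Rightarrow> (real \<times> real) measure"
  assumes K_pos: "K > 0"
    and f0_meas: "f0 \<in> borel_measurable lborel"
    and f0_nonneg: "\<And>x. f0 x \<ge> 0"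
    and f0_supp: "\<And>x. x \<notin> Tstrip \<Longrightarrow> f0 x = 0"
    and f0_int: "integrable lborel f0"
    and f0_prob: "(\<integral> x. f0 x \<partial>lborel) = 1"
    and f0_entropy: "integrable lborel (\<lambda>x. f0 x * \<bar>ln (f0 x)\<bar>)"
    and \<Theta>_meas: "\<And>t. (\<lambda>x. \<Theta> t (fst x) (snd x)) \<in> borel_measurable lborel"
    and \<mu>_def: "\<And>t. \<mu> t = distr (density lborel (\<lambda>x. ennreal (f0 x))) lborel
                         (\<lambda>x. (wrap (\<Theta> t (fst x) (snd x)), snd x))"
    and \<Theta>_init: "\<And>\<theta> \<omega>. \<Theta> 0 \<theta> \<omega> = \<theta>"
    and \<Theta>_ode: "\<And>t \<theta> \<omega>. ((\<lambda>s. \<Theta> s \<theta> \<omega>) has_real_derivative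
                   (\<omega> - K * (\<integral> y. sin (\<Theta> t \<theta> \<omega> - fst y) \<partial>\<mu> t))) (at t)"
  shows "\<exists>f :: real \<Rightarrow> real \<times> real \<Rightarrow> real.
           (\<forall>t. f t \<in> borel_measurable lborel \<and> (\<forall>x. f t x \<ge> 0) \<and>
                (\<forall>x. x \<notin> Tstrip \<longrightarrow> f t x = 0) \<and>
                \<mu> t = density lborel (\<lambda>x. ennreal (f t x)) \<and>
                integrable lborel (\<lambda>x. f t x * ln (f t x))) \<and>
           (\<forall>t. ((\<lambda>s. entropy (f s)) has_real_derivative K * (order_param (\<mu> t))\<^sup>2) (at t)) \<and>
           mono (\<lambda>t. entropy (f t))"
proof -
  interpret k: kur K f0 \<Theta> \<mu>
    by (unfold_locales; rule assms)
  show ?thesis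
    apply (rule exI[of _ k.ft])
    using k.ft_meas_b k.ft_nonneg k.ft_supp k.\<mu>_density k.ft_integrable k.entropy_deriv k.entropy_mono
    by auto
qed

end
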